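(* Let $\gamma$ be a Jordan curve in $\mathbb{R}^2$ of bounded convex curvature. Then there exists a constant $\eta>0$ such that whenever $B(x,r)\subset\operatorname{Int}\gamma$ is an open disk of radius $r$ and $\partial B(x,r)$ meets $\gamma$ in at least two points, we have $r\ge\eta$.
   Context: $\operatorname{Int}\gamma$ is the bounded component of $\mathbb{R}^2\setminus\gamma$; $B(x,r)$ is the open disk of center $x$ and radius $r$. A Jordan curve $\gamma$ has bounded convex curvature if for every $x\in\gamma$ there exist an open disk $U_x$ of radius $1$ and $\varepsilon_x>0$ with $x\in\partial U_x$ and $B(x,\varepsilon_x)\cap U_x\subset\operatorname{Int}\gamma$. *)

theory Defs
  imports "HOL-Analysis.Analysis"
begin

text \<open>The plane R^2 is modelled by the type complex. A Jordan curve is the image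
of a closed simple path (a continuous map [0,1] -> R^2, injective except at endpoints).\<close>

definition jordan_curve :: "(real \<Rightarrow> complex) \<Rightarrow> bool" where
  "jordan_curve g \<longleftrightarrow> simple_path g \<and> pathfinish g = pathstart g"

definition Int_curve :: "(real \<Rightarrow> complex) \<Rightarrow> complex set" where
  "Int_curve g = inside (path_image g)"

definition bounded_convex_curvature :: "(real \<Rightarrow> complex) \<Rightarrow> bool" where
  "bounded_convex_curvature g \<longleftrightarrow>
     (\<forall>x\<in>path_image g. \<exists>c. \<exists>\<epsilon>>0. x \<in> frontier (ball c 1) \<and>
         ball x \<epsilon> \<inter> ball c 1 \<subseteq> Int_curve g)"

end

theory Submission
  imports Defs
begin


lemma norm_add_sq: "(norm (u + v::'a::real_inner))^2 = (norm u)^2 + 2 * inner u v + (norm v)^2"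
  by (simp add: power2_norm_eq_inner inner_add_left inner_add_right inner_commute)

lemma disk_escape:
  fixes m c x :: complex
  assumes dc: "dist c m = 1" and dx: "dist x m = \<rho>" and r0: "0 < \<rho>" and r1: "\<rho> < 1" and e: "e > 0"
  shows "\<exists>y. dist c y < 1 \<and> dist m y < e \<and> \<rho> < dist x y"
proof -
  define a where "a = m - c"
  define n where "n = m - x"
  have na: "norm a = 1" using dc by (simp add: a_def dist_norm norm_minus_commute)
  have nn: "norm n = \<rho>" using dx by (simp add: n_def dist_norm norm_minus_commute)
  have cs: "inner a n \<le> \<rho>" using norm_cauchy_schwarz[of a n] na nn by simp
  show ?thesis
  proof (cases "inner a n < \<rho>")
    case True
    define d where "d = n - \<rho> *\<^sub>R a"
    have ad: "inner a d < 0" using True na by (simp add: d_def inner_diff_right power2_norm_eq_inner[symmetric])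
    have nd: "inner n d > 0" using True nn r0 
      by (simp add: d_def inner_diff_right power2_norm_eq_inner[symmetric] power2_eq_square inner_commute)
    have d0: "d \<noteq> 0" using ad by auto
    define D where "D = (norm d)^2"
    have D0: "D > 0" using d0 by (simp add: D_def)
    define t where "t = min (e / (2 * norm d)) (- inner a d / D)"
    have t0: "t > 0" using e d0 ad D0 by (simp add: t_def divide_neg_pos)
    have tD: "t * D \<le> - inner a d"
    proof -
      have "t \<le> - inner a d / D" by (simp add: t_def)
      then show ?thesis using D0 by (simp add: field_simps)
    qed
    have te: "t * norm d < e"
    proof -
      have "t \<le> e / (2 * norm d)" by (simp add: t_def)
      then have "t * norm d \<le> e/2" using d0 by (simp add: field_simps)
      then show ?thesis using e by linarith
    qed
    define y where "y = m + t *\<^sub>R d"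
    have yc: "y - c = a + t *\<^sub>R d" by (simp add: y_def a_def)
    have yx: "y - x = n + t *\<^sub>R d" by (simp add: y_def n_def)
    have "(dist c y)^2 = 1 + 2 * t * inner a d + t^2 * D"
      by (simp add: dist_norm norm_minus_commute[of c] yc norm_add_sq na D_def power_mult_distrib)
    also have "\<dots> < 1"
    proof -
      have "t * (t * D) \<le> t * (- inner a d)" using mult_left_mono[OF tD, of t] t0 by simp
      moreover have "t * inner a d < 0" using t0 ad by (simp add: mult_pos_neg)
      ultimately show ?thesis by (simp add: power2_eq_square algebra_simps)
    qed
    finally have 1: "dist c y < 1" by (simp add: power_less_one_iff)
    have "(dist x y)^2 = \<rho>^2 + 2 * t * inner n d + t^2 * D"
      by (simp add: dist_norm norm_minus_commute[of x] yx norm_add_sq nn D_def power_mult_distrib)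
    also have "\<dots> > \<rho>^2" using t0 nd D0 by (simp add: add_pos_pos)
    finally have 2: "\<rho> < dist x y" by (rule power2_less_imp_less[OF _ zero_le_dist])
    have 3: "dist m y < e" using te t0 by (simp add: y_def dist_norm)
    show ?thesis using 1 2 3 by blast
  next
    case False
    then have ian: "inner a n = \<rho>" using cs by simp
    have eq: "inner (n - \<rho> *\<^sub>R a) (n - \<rho> *\<^sub>R a) = inner n n - 2*\<rho>*inner a n + \<rho>^2 * inner a a"
      by (simp only: inner_diff_left inner_diff_right inner_scaleR_left inner_scaleR_right inner_commute[of n a])
         (simp add: algebra_simps power2_eq_square)
    have "inner n n - 2*\<rho>*inner a n + \<rho>^2 * inner a a = 0"
      using ian na nn by (simp add: power2_norm_eq_inner[symmetric] power2_eq_square)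
    then have "inner (n - \<rho> *\<^sub>R a) (n - \<rho> *\<^sub>R a) = 0" using eq by linarith
    then have nra: "n = \<rho> *\<^sub>R a" by simp
    define \<tau> where "\<tau> = \<i> * a"
    have at: "inner a \<tau> = 0" by (simp add: \<tau>_def inner_complex_def)
    have nt: "norm \<tau> = 1" by (simp add: \<tau>_def norm_mult na)
    define k where "k = (\<rho> + 1) / (4 * \<rho>)"
    have k0: "k > 0" using r0 by (simp add: k_def)
    have k1: "2 * k - 1 = (1 - \<rho>) / (2 * \<rho>)" using r0 by (simp add: k_def field_simps)
    have k2: "1 - 2 * \<rho> * k = (1 - \<rho>) / 2" using r0 by (simp add: k_def field_simps)
    define \<beta> where "\<beta> = min 1 ((1 - \<rho>) / (2 * \<rho>))"
    have b0: "\<beta> > 0" using r0 r1 by (simp add: \<beta>_def)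
    have b1: "\<beta> \<le> 1" "\<beta> \<le> (1 - \<rho>) / (2 * \<rho>)" by (auto simp: \<beta>_def)
    define s where "s = min (e / (2 * (1 + k))) (\<beta> / (k + 1))"
    have s0: "s > 0" using e k0 b0 by (simp add: s_def)
    have sk: "s * k < \<beta>"
    proof -
      have "s \<le> \<beta> / (k + 1)" by (simp add: s_def)
      then have "s * (k+1) \<le> \<beta>" using k0 by (simp add: field_simps)
      then show ?thesis using s0 by (simp add: algebra_simps)
    qed
    have s1: "s \<le> 1"
    proof -
      have "s \<le> \<beta> / (k + 1)" by (simp add: s_def)
      also have "\<dots> \<le> 1" using b1 k0 by (simp add: field_simps)
      finally show ?thesis .
    qed
    have se: "s * (1 + k) < e"
    proof -
      have "s \<le> e / (2 * (1 + k))" by (simp add: s_def)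
      then have "s * (1 + k) \<le> e / 2" using k0 by (simp add: field_simps)
      then show ?thesis using e by linarith
    qed
    have sk2: "(s * k)^2 < (1 - \<rho>) / (2 * \<rho>)"
    proof -
      have "(s*k)^2 < \<beta>^2" using sk s0 k0 by (simp add: power_strict_mono)
      also have "\<dots> \<le> \<beta>" using b0 b1 by (simp add: power2_eq_square mult_le_cancel_left1)
      finally show ?thesis using b1 by linarith
    qed
    define y where "y = m + s *\<^sub>R \<tau> - (s^2 * k) *\<^sub>R a"
    have yc: "y - c = (1 - s^2 * k) *\<^sub>R a + s *\<^sub>R \<tau>" by (simp add: y_def a_def algebra_simps)
    have yx: "y - x = (\<rho> - s^2 * k) *\<^sub>R a + s *\<^sub>R \<tau>" 
      using nra by (simp add: y_def n_def algebra_simps)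
    have "(dist c y)^2 = (1 - s^2 * k)^2 + s^2"
      by (simp add: dist_norm norm_minus_commute[of c] yc norm_add_sq na nt at power_mult_distrib)
    also have "\<dots> = 1 - s^2 * ((2 * k - 1) - (s * k)^2)" by (simp add: algebra_simps power2_eq_square)
    also have "\<dots> < 1" using sk2 k1 s0 by simp
    finally have 1: "dist c y < 1" by (simp add: power_less_one_iff)
    have "(dist x y)^2 = (\<rho> - s^2 * k)^2 + s^2"
      by (simp add: dist_norm norm_minus_commute[of x] yx norm_add_sq na nt at power_mult_distrib)
    also have "\<dots> = \<rho>^2 + s^2 * ((1 - 2 * \<rho> * k) + (s * k)^2)" by (simp add: algebra_simps power2_eq_square)
    also have "\<dots> > \<rho>^2" using k2 s0 r1 by (simp add: add_pos_nonneg)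
    finally have 2: "\<rho> < dist x y" by (rule power2_less_imp_less[OF _ zero_le_dist])
    have "dist m y = norm ((s^2 * k) *\<^sub>R a - s *\<^sub>R \<tau>)" by (simp add: y_def dist_norm algebra_simps)
    also have "\<dots> \<le> norm ((s^2 * k) *\<^sub>R a) + norm (s *\<^sub>R \<tau>)" by (rule norm_triangle_ineq4)
    also have "\<dots> = s + s^2 * k" using s0 k0 nt na by simp
    also have "\<dots> \<le> s + s * k" using s0 s1 k0 by (simp add: power2_eq_square mult_left_le_one_le)
    also have "\<dots> < e" using se by (simp add: algebra_simps)
    finally have 3: "dist m y < e" .
    show ?thesis using 1 2 3 by blast
  qed
qed

lemma simple_path_mid:
  assumes "simple_path g" "pathstart g \<noteq> pathfinish g"
  shows "g (1/2) \<in> path_image g" "g (1/2) \<noteq> pathstart g" "g (1/2) \<noteq> pathfinish g"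
proof -
  show "g (1/2) \<in> path_image g" by (simp add: path_image_def)
  have lf: "\<And>u v. u \<in> {0..1} \<Longrightarrow> v \<in> {0..1} \<Longrightarrow> g u = g v \<Longrightarrow> u = v \<or> u = 0 \<and> v = 1 \<or> u = 1 \<and> v = 0"
    using assms(1) by (auto simp: simple_path_def loop_free_def)
  show "g (1/2) \<noteq> pathstart g" using lf[of "1/2" 0] by (auto simp: pathstart_def)
  show "g (1/2) \<noteq> pathfinish g" using lf[of "1/2" 1] by (auto simp: pathfinish_def)
qed

lemma not_bounded_compl_cball: "\<not> bounded (- cball (x::complex) e)"
proof
  assume "bounded (- cball x e)"
  then have "bounded (cball x e \<union> - cball x e)" using bounded_cball bounded_Un by blast
  moreover have "cball x e \<union> - cball x e = UNIV" by auto
  ultimately show False using not_bounded_UNIV by metis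
qed

lemma inside_subset_cball:
  fixes S :: "complex set"
  assumes "S \<subseteq> cball x \<rho>"
  shows "inside S \<subseteq> cball x \<rho>"
proof -
  have "inside S \<subseteq> cball x \<rho> - S"
    apply (rule inside_subset[of "- cball x \<rho>"])
    using assms not_bounded_compl_cball[of x \<rho>]
    by (auto intro!: connected_complement_bounded_convex)
  then show ?thesis by blast
qed

lemma pocket:
  fixes c1 c2 \<alpha> :: "real \<Rightarrow> complex"
  assumes sp1: "simple_path c1" "pathstart c1 = p" "pathfinish c1 = q"
   and sp2: "simple_path c2" "pathstart c2 = p" "pathfinish c2 = q"
   and spa: "simple_path \<alpha>" "pathstart \<alpha> = p" "pathfinish \<alpha> = q"
   and pq: "p \<noteq> q"
   and i12: "path_image c1 \<inter> path_image c2 = {p,q}"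
   and i1a: "path_image c1 \<inter> path_image \<alpha> = {p,q}"
   and i2a: "path_image c2 \<inter> path_image \<alpha> = {p,q}"
   and asph: "path_image \<alpha> \<subseteq> sphere x r"
   and ain: "path_image \<alpha> - {p,q} \<subseteq> inside(path_image c1 \<union> path_image c2)"
   and bin: "ball x r \<subseteq> inside(path_image c1 \<union> path_image c2)"
   and r: "0 < r"
   and bcc: "\<forall>m \<in> path_image c1. \<exists>c \<epsilon>. \<epsilon> > 0 \<and> m \<in> sphere c 1 \<and>
               ball m \<epsilon> \<inter> ball c 1 \<subseteq> inside(path_image c1 \<union> path_image c2)"
  shows "\<exists>y \<in> path_image c1. 1 \<le> dist x y"
proof (rule ccontr)
  assume H: "\<not> (\<exists>y \<in> path_image c1. 1 \<le> dist x y)"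
  define I where "I = inside(path_image c1 \<union> path_image c2)"
  define W where "W = inside(path_image c1 \<union> path_image \<alpha>)"
  define W2 where "W2 = inside(path_image c2 \<union> path_image \<alpha>)"
  have ne: "path_image \<alpha> \<inter> I \<noteq> {}"
    using simple_path_mid[OF spa(1)] spa pq ain by (auto simp: I_def)
  obtain WW2: "W \<inter> W2 = {}" and WU: "W \<union> W2 \<union> (path_image \<alpha> - {p,q}) = I"
    using split_inside_simple_closed_curve[OF sp1 sp2 spa pq i12 i1a i2a] ne
    unfolding W_def W2_def I_def by blast
  have pc1: "p \<in> path_image c1" "q \<in> path_image c1" using sp1 by (auto simp flip: sp1(2,3))
  have pa: "p \<in> path_image \<alpha>" "q \<in> path_image \<alpha>" using spa by (auto simp flip: spa(2,3))
  have dp: "dist x p = r" "dist x q = r" using pa asph by auto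
  have cont: "continuous_on (path_image c1) (\<lambda>y. dist x y)" by (intro continuous_intros)
  obtain m0 where m0: "m0 \<in> path_image c1" "\<And>y. y \<in> path_image c1 \<Longrightarrow> dist x y \<le> dist x m0"
    using continuous_attains_sup[OF compact_path_image[OF simple_path_imp_path[OF sp1(1)]] _ cont] pc1
    by blast
  define \<rho> where "\<rho> = dist x m0"
  have rho1: "\<rho> < 1" using H m0 by (auto simp: \<rho>_def)
  have rrho: "r \<le> \<rho>" using m0(2)[OF pc1(1)] dp by (simp add: \<rho>_def)
  have Wsub: "W \<subseteq> cball x \<rho>"
    unfolding W_def
    apply (rule inside_subset_cball)
    using m0 asph rrho by (force simp: \<rho>_def)
  have Iov: "I \<inter> (path_image c1 \<union> path_image c2) = {}" by (simp add: I_def)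
  obtain m where m: "m \<in> path_image c1" "m \<noteq> p" "m \<noteq> q" "dist x m = \<rho>"
  proof (cases "m0 = p \<or> m0 = q")
    case True
    then have rr: "\<rho> = r" using dp by (auto simp: \<rho>_def)
    define m where "m = c1 (1/2)"
    have mm: "m \<in> path_image c1" "m \<noteq> p" "m \<noteq> q"
      using simple_path_mid[OF sp1(1)] sp1 pq by (auto simp: m_def)
    have "dist x m \<le> \<rho>" using m0(2)[OF mm(1)] by (simp add: \<rho>_def)
    moreover have "m \<notin> ball x r"
    proof
      assume "m \<in> ball x r"
      then have "m \<in> I" using bin by (auto simp: I_def)
      then show False using Iov mm(1) by blast
    qed
    ultimately have "dist x m = \<rho>" using rr by simp
    then show ?thesis using that mm by blast
  next
    case False
    then show ?thesis using that m0 by (auto simp: \<rho>_def)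
  qed
  obtain c \<epsilon> where ce: "\<epsilon> > 0" "m \<in> sphere c 1" "ball m \<epsilon> \<inter> ball c 1 \<subseteq> I"
    using bcc m(1) by (auto simp: I_def)
  have rho0: "0 < \<rho>" using r rrho by simp
  have "m \<in> closure W2"
    unfolding closure_approachable
  proof (intro allI impI)
    fix e :: real assume e: "e > 0"
    obtain y where y: "dist c y < 1" "dist m y < min e \<epsilon>" "\<rho> < dist x y"
      using disk_escape[of c m x \<rho> "min e \<epsilon>"] ce m rho0 rho1 e by auto
    have yI: "y \<in> I" using ce(3) y by (auto simp: dist_commute)
    have "y \<notin> W" using Wsub y by auto
    moreover have "y \<notin> path_image \<alpha>" using asph y rrho by auto
    ultimately have "y \<in> W2" using yI WU by blast
    then show "\<exists>y\<in>W2. dist y m < e" using y by (auto simp: dist_commute)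
  qed
  moreover have "m \<notin> W2" using WU Iov m(1) by blast
  ultimately have "m \<in> frontier W2"
    by (simp add: frontier_def W2_def interior_open open_inside closed_Un closed_path_image
        simple_path_imp_path sp2 spa)
  then have "m \<in> path_image c2 \<union> path_image \<alpha>"
    using frontier_inside_subset[of "path_image c2 \<union> path_image \<alpha>"]
    by (auto simp: W2_def closed_Un closed_path_image simple_path_imp_path sp2 spa)
  then show False using m i12 i1a by blast
qed


lemma unif_arc_small:
  fixes g :: "real \<Rightarrow> complex"
  assumes sp: "simple_path g" and cl: "pathfinish g = pathstart g" and d: "\<delta> > 0"
  shows "\<exists>\<eta>>0. \<forall>s t. 0 \<le> s \<longrightarrow> s \<le> t \<longrightarrow> t \<le> 1 \<longrightarrow> dist (g s) (g t) < \<eta> \<longrightarrow>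
           (\<forall>v\<in>{s..t}. dist (g v) (g s) < \<delta>) \<or> (\<forall>v\<in>{t..1} \<union> {0..s}. dist (g v) (g s) < \<delta>)"
proof -
  have cg: "continuous_on {0..1} g" using simple_path_imp_path[OF sp] by (simp add: path_def)
  have g01: "g 1 = g 0" using cl by (simp add: pathfinish_def pathstart_def)
  have lf: "\<And>u v. u \<in> {0..1} \<Longrightarrow> v \<in> {0..1} \<Longrightarrow> g u = g v \<Longrightarrow> u = v \<or> u = 0 \<and> v = 1 \<or> u = 1 \<and> v = 0"
    using sp by (auto simp: simple_path_def loop_free_def)
  have "uniformly_continuous_on {0..1} g" using compact_uniformly_continuous[OF cg] by simp
  then obtain \<tau> where tau: "\<tau> > 0" "\<And>u v. u \<in> {0..1} \<Longrightarrow> v \<in> {0..1} \<Longrightarrow> dist v u < \<tau> \<Longrightarrow> dist (g v) (g u) < \<delta>/3"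
    unfolding uniformly_continuous_on_def using d by (metis divide_pos_pos zero_less_numeral)
  define K where "K = {z::real\<times>real. 0 \<le> fst z \<and> fst z \<le> snd z \<and> snd z \<le> 1 \<and> \<tau> \<le> snd z - fst z \<and> \<tau> \<le> 1 - snd z + fst z}"
  have key: "\<And>s t. 0 \<le> s \<Longrightarrow> s \<le> t \<Longrightarrow> t \<le> 1 \<Longrightarrow> (s,t) \<notin> K \<Longrightarrow>
           (\<forall>v\<in>{s..t}. dist (g v) (g s) < \<delta>) \<or> (\<forall>v\<in>{t..1} \<union> {0..s}. dist (g v) (g s) < \<delta>)"
  proof -
    fix s t :: real assume st: "0 \<le> s" "s \<le> t" "t \<le> 1" "(s,t) \<notin> K"
    then have "t - s < \<tau> \<or> 1 - t + s < \<tau>" by (auto simp: K_def)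
    then show "(\<forall>v\<in>{s..t}. dist (g v) (g s) < \<delta>) \<or> (\<forall>v\<in>{t..1} \<union> {0..s}. dist (g v) (g s) < \<delta>)"
    proof
      assume "t - s < \<tau>"
      then have "\<forall>v\<in>{s..t}. dist (g v) (g s) < \<delta>"
      proof (intro ballI)
        fix v assume "t - s < \<tau>" "v \<in> {s..t}"
        then have "dist (g v) (g s) < \<delta>/3" using tau(2)[of s v] st by (auto simp: dist_real_def)
        then show "dist (g v) (g s) < \<delta>" using d by linarith
      qed
      then show ?thesis ..
    next
      assume h: "1 - t + s < \<tau>"
      have gs: "dist (g s) (g 0) < \<delta>/3" using tau(2)[of 0 s] st h by (auto simp: dist_real_def)
      have "\<forall>v\<in>{t..1} \<union> {0..s}. dist (g v) (g s) < \<delta>"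
      proof
        fix v assume v: "v \<in> {t..1} \<union> {0..s}"
        show "dist (g v) (g s) < \<delta>"
        proof (cases "v \<le> s")
          case True
          then have "dist (g v) (g s) < \<delta>/3" using tau(2)[of s v] st h v by (auto simp: dist_real_def)
          then show ?thesis using d by linarith
        next
          case False
          then have "v \<in> {t..1}" using v by auto
          then have "dist (g v) (g 1) < \<delta>/3" using tau(2)[of 1 v] st h by (auto simp: dist_real_def)
          then have "dist (g v) (g s) < \<delta>/3 + \<delta>/3" using gs g01 dist_triangle_less_add[of "g v" "g 0" "\<delta>/3" "g s" "\<delta>/3"]
            by (simp add: dist_commute)
          then show ?thesis using d by linarith
        qed
      qed
      then show ?thesis ..
    qed
  qed
  show ?thesis
  proof (cases "K = {}")
    case True
    then show ?thesis using key by (intro exI[of _ 1]) auto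
  next
    case False
    have cK: "closed K" unfolding K_def
      by (intro closed_Collect_conj closed_Collect_le continuous_intros)
    have "K \<subseteq> {0..1} \<times> {0..1}" by (auto simp: K_def)
    moreover have "bounded ({0..1::real} \<times> {0..1::real})" by (intro bounded_Times) auto
    ultimately have bK: "bounded K" using bounded_subset by blast
    have kK: "compact K" using cK bK by (simp add: compact_eq_bounded_closed)
    have c1: "continuous_on K (\<lambda>z. g (fst z))"
      by (rule continuous_on_compose2[OF cg continuous_on_fst]) (auto simp: K_def)
    have c2: "continuous_on K (\<lambda>z. g (snd z))"
      by (rule continuous_on_compose2[OF cg continuous_on_snd]) (auto simp: K_def)
    have cF: "continuous_on K (\<lambda>z. dist (g (fst z)) (g (snd z)))"
      using c1 c2 by (intro continuous_on_dist)
    obtain z0 where z0: "z0 \<in> K" "\<And>z. z \<in> K \<Longrightarrow> dist (g (fst z0)) (g (snd z0)) \<le> dist (g (fst z)) (g (snd z))"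
      using continuous_attains_inf[OF kK False cF] by blast
    define \<eta> where "\<eta> = dist (g (fst z0)) (g (snd z0))"
    have "g (fst z0) \<noteq> g (snd z0)"
    proof
      assume "g (fst z0) = g (snd z0)"
      then have "fst z0 = snd z0 \<or> fst z0 = 0 \<and> snd z0 = 1 \<or> fst z0 = 1 \<and> snd z0 = 0"
        using lf[of "fst z0" "snd z0"] z0(1) by (auto simp: K_def)
      then show False using z0(1) tau(1) by (auto simp: K_def)
    qed
    then have e0: "\<eta> > 0" by (simp add: \<eta>_def)
    show ?thesis
    proof (intro exI[of _ \<eta>] conjI e0 allI impI)
      fix s t assume st: "0 \<le> s" "s \<le> t" "t \<le> 1" "dist (g s) (g t) < \<eta>"
      have "(s,t) \<notin> K" using z0(2)[of "(s,t)"] st(4) by (auto simp: \<eta>_def)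
      then show "(\<forall>v\<in>{s..t}. dist (g v) (g s) < \<delta>) \<or> (\<forall>v\<in>{t..1} \<union> {0..s}. dist (g v) (g s) < \<delta>)"
        using key st by blast
    qed
  qed
qed


lemma exp_ii_periodic: "exp (\<i> * complex_of_real (u + 2*pi)) = exp (\<i> * complex_of_real u)"
proof -
  have "\<i> * complex_of_real (u + 2*pi) = \<i> * complex_of_real u + 2 * complex_of_real pi * \<i>"
    by (simp add: algebra_simps)
  then show ?thesis by (simp add: exp_add)
qed

lemma exp_ii_inj:
  assumes "exp (\<i> * complex_of_real u) = exp (\<i> * complex_of_real v)" "\<bar>u - v\<bar> < 2*pi"
  shows "u = v"
proof -
  obtain n :: int where n: "\<i> * complex_of_real u = \<i> * complex_of_real v + (of_int (2 * n) * pi) * \<i>"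
    using assms(1) exp_eq by blast
  then have "Im (\<i> * complex_of_real u) = Im (\<i> * complex_of_real v + (of_int (2 * n) * pi) * \<i>)" by simp
  then have uv: "u = v + 2 * of_int n * pi" by simp
  then have "\<bar>2 * of_int n * pi\<bar> < 2 * pi" using assms(2) by simp
  then have "\<bar>of_int n\<bar> < (1::real)" by (simp add: abs_mult)
  then have "n = 0" by linarith
  then show ?thesis using uv by simp
qed

lemma circle_gap_arc:
  fixes \<Gamma> :: "complex set" and x :: complex
  assumes cl: "closed \<Gamma>" and r: "r > 0" and p: "p \<in> sphere x r" "p \<in> \<Gamma>"
    and q: "q \<in> sphere x r" "q \<in> \<Gamma>" and pq: "p \<noteq> q"
    and w: "w0 \<in> sphere x r" "w0 \<notin> \<Gamma>"
  obtains \<alpha> where "arc \<alpha>" "pathstart \<alpha> \<in> \<Gamma>" "pathfinish \<alpha> \<in> \<Gamma>" "path_image \<alpha> \<subseteq> sphere x r"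
    "path_image \<alpha> \<inter> \<Gamma> = {pathstart \<alpha>, pathfinish \<alpha>}"
proof -
  define \<theta>0 where "\<theta>0 = Arg (w0 - x)"
  define \<phi> where "\<phi> = (\<lambda>\<theta>. x + complex_of_real r * exp (\<i> * complex_of_real (\<theta>0 + \<theta>)))"
  have per: "\<And>\<theta>. \<phi> (\<theta> + 2*pi) = \<phi> \<theta>"
    unfolding \<phi>_def using exp_ii_periodic by (metis add.assoc)
  have phis: "\<And>\<theta>. \<phi> \<theta> \<in> sphere x r" using r by (simp add: \<phi>_def dist_norm norm_mult)
  have surj: "\<exists>\<theta>\<in>{0..<2*pi}. \<phi> \<theta> = z" if z: "z \<in> sphere x r" for z
  proof -
    have nz: "norm (z - x) = r" using z by (simp add: dist_norm norm_minus_commute)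
    then have z0: "z - x \<noteq> 0" using r by auto
    have ze: "z - x = complex_of_real r * exp (\<i> * complex_of_real (Arg (z - x)))"
      using Arg_eq[OF z0] nz by simp
    define \<beta> where "\<beta> = Arg (z - x) - \<theta>0"
    have bb: "-2*pi < \<beta>" "\<beta> < 2*pi" using Arg_bounded[of "z - x"] Arg_bounded[of "w0 - x"] by (auto simp: \<beta>_def \<theta>0_def)
    show ?thesis
    proof (cases "\<beta> < 0")
      case True
      have "\<phi> (\<beta> + 2*pi) = \<phi> \<beta>" by (rule per)
      also have "\<phi> \<beta> = z" using ze by (simp add: \<phi>_def \<beta>_def)
      finally show ?thesis using True bb by (intro bexI[of _ "\<beta> + 2*pi"]) auto
    next
      case False
      have "\<phi> \<beta> = z" using ze by (simp add: \<phi>_def \<beta>_def)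
      then show ?thesis using False bb by (intro bexI[of _ "\<beta>"]) auto
    qed
  qed
  have phi0: "\<phi> 0 = w0"
  proof -
    have nz: "norm (w0 - x) = r" using w by (simp add: dist_norm norm_minus_commute)
    then have z0: "w0 - x \<noteq> 0" using r by auto
    show ?thesis using Arg_eq[OF z0] nz by (simp add: \<phi>_def \<theta>0_def)
  qed
  have phi2: "\<phi> (2*pi) = w0" using per[of 0] phi0 by simp
  have contphi: "continuous_on UNIV \<phi>" unfolding \<phi>_def by (intro continuous_intros)
  define T where "T = {0..2*pi} \<inter> \<phi> -` \<Gamma>"
  have cT: "compact T" unfolding T_def
    using continuous_closed_vimage[OF cl, of \<phi>] contphi
    by (intro compact_Int_closed) (auto simp: continuous_on_eq_continuous_at)
  obtain tp where tp: "tp \<in> {0..<2*pi}" "\<phi> tp = p" using surj p(1) by blast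
  obtain tq where tq: "tq \<in> {0..<2*pi}" "\<phi> tq = q" using surj q(1) by blast
  have tpT: "tp \<in> T" "tq \<in> T" using tp tq p q by (auto simp: T_def)
  have tpq: "tp \<noteq> tq" using tp tq pq by auto
  obtain a where a: "a \<in> T" "\<And>y. y \<in> T \<Longrightarrow> a \<le> y" using compact_attains_inf[OF cT] tpT by blast
  obtain b where b: "b \<in> T" "\<And>y. y \<in> T \<Longrightarrow> y \<le> b" using compact_attains_sup[OF cT] tpT by blast
  have ab: "a < b"
  proof -
    have "a \<le> tp" "a \<le> tq" "tp \<le> b" "tq \<le> b" using a(2) b(2) tpT by auto
    then show ?thesis using tpq by linarith
  qed
  have a0: "0 < a"
  proof -
    have "0 \<le> a" "\<phi> a \<in> \<Gamma>" using a(1) by (auto simp: T_def)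
    moreover have "a \<noteq> 0" using \<open>\<phi> a \<in> \<Gamma>\<close> w(2) phi0 by auto
    ultimately show ?thesis by linarith
  qed
  have b2: "b < 2*pi"
  proof -
    have "b \<le> 2*pi" "\<phi> b \<in> \<Gamma>" using b(1) by (auto simp: T_def)
    moreover have "b \<noteq> 2*pi" using \<open>\<phi> b \<in> \<Gamma>\<close> w(2) phi2 by auto
    ultimately show ?thesis by linarith
  qed
  define L where "L = 2*pi + a - b"
  have L0: "0 < L" "L < 2*pi" using a0 b2 ab by (auto simp: L_def)
  define \<alpha> where "\<alpha> = (\<lambda>t. \<phi> (b + t * L))"
  have arc: "arc \<alpha>"
    unfolding arc_def
  proof
    show "path \<alpha>" unfolding path_def \<alpha>_def \<phi>_def by (intro continuous_intros)
    show "inj_on \<alpha> {0..1}"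
    proof (rule inj_onI)
      fix t1 t2 :: real assume t: "t1 \<in> {0..1}" "t2 \<in> {0..1}" "\<alpha> t1 = \<alpha> t2"
      then have "exp (\<i> * complex_of_real (\<theta>0 + (b + t1 * L))) = exp (\<i> * complex_of_real (\<theta>0 + (b + t2 * L)))"
        using r by (simp add: \<alpha>_def \<phi>_def)
      moreover have "\<bar>(\<theta>0 + (b + t1 * L)) - (\<theta>0 + (b + t2 * L))\<bar> < 2*pi"
      proof -
        have "\<bar>(\<theta>0 + (b + t1 * L)) - (\<theta>0 + (b + t2 * L))\<bar> = \<bar>t1 - t2\<bar> * L"
          using L0 by (simp add: abs_mult left_diff_distrib[symmetric])
        also have "\<dots> \<le> 1 * L" using t L0 by (intro mult_right_mono) auto
        finally show ?thesis using L0 by simp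
      qed
      ultimately have "\<theta>0 + (b + t1 * L) = \<theta>0 + (b + t2 * L)" by (rule exp_ii_inj)
      then show "t1 = t2" using L0 by simp
    qed
  qed
  have st: "pathstart \<alpha> = \<phi> b" by (simp add: pathstart_def \<alpha>_def)
  have fi: "pathfinish \<alpha> = \<phi> a"
  proof -
    have "pathfinish \<alpha> = \<phi> (a + 2*pi)" by (simp add: pathfinish_def \<alpha>_def L_def algebra_simps)
    then show ?thesis using per by simp
  qed
  have stG: "pathstart \<alpha> \<in> \<Gamma>" using b st by (simp add: T_def)
  have fiG: "pathfinish \<alpha> \<in> \<Gamma>" using a fi by (simp add: T_def)
  have img: "path_image \<alpha> \<subseteq> sphere x r" using phis by (auto simp: path_image_def \<alpha>_def)
  have int: "path_image \<alpha> \<inter> \<Gamma> \<subseteq> {pathstart \<alpha>, pathfinish \<alpha>}"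
  proof
    fix z assume z: "z \<in> path_image \<alpha> \<inter> \<Gamma>"
    then obtain t where t: "t \<in> {0..1}" "z = \<alpha> t" by (auto simp: path_image_def)
    show "z \<in> {pathstart \<alpha>, pathfinish \<alpha>}"
    proof (cases "t = 0 \<or> t = 1")
      case True
      then show ?thesis using t by (auto simp: pathstart_def pathfinish_def)
    next
      case False
      then have t01: "0 < t" "t < 1" using t by auto
      define \<theta>' where "\<theta>' = b + t * L"
      have th1: "b < \<theta>'" using t01 L0 by (simp add: \<theta>'_def)
      have th2: "\<theta>' < 2*pi + a"
      proof -
        have "t * L < 1 * L" using t01 L0 by (intro mult_strict_right_mono) auto
        then show ?thesis by (simp add: \<theta>'_def L_def)
      qed
      have phz: "\<phi> \<theta>' \<in> \<Gamma>" using z t by (simp add: \<alpha>_def \<theta>'_def)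
      show ?thesis
      proof (cases "\<theta>' \<le> 2*pi")
        case True
        then have "\<theta>' \<in> T" using phz th1 a0 ab by (auto simp: T_def)
        then show ?thesis using b(2) th1 by force
      next
        case False
        have "\<phi> (\<theta>' - 2*pi) = \<phi> \<theta>'" using per[of "\<theta>' - 2*pi"] by simp
        then have "\<theta>' - 2*pi \<in> T" using phz False th2 ab b2 by (auto simp: T_def)
        then show ?thesis using a(2) th2 by force
      qed
    qed
  qed
  have "path_image \<alpha> \<inter> \<Gamma> = {pathstart \<alpha>, pathfinish \<alpha>}"
    using int stG fiG by auto
  then show ?thesis using that arc stG fiG img by blast
qed


lemma sphere_not_in_curve:
  fixes g :: "real \<Rightarrow> complex"
  assumes sp: "simple_path g" and cl: "pathfinish g = pathstart g" and r: "0 < r" and r1: "r < 1"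
    and sph: "sphere x r \<subseteq> path_image g" and bin: "ball x r \<subseteq> inside(path_image g)"
    and bcc: "\<forall>m\<in>path_image g. \<exists>c \<epsilon>. \<epsilon>>0 \<and> m \<in> sphere c 1 \<and> ball m \<epsilon> \<inter> ball c 1 \<subseteq> inside(path_image g)"
  shows False
proof (cases "path_image g \<subseteq> cball x r")
  case True
  have Isub: "inside (path_image g) \<subseteq> cball x r" using inside_subset_cball[OF True] .
  define m where "m = x + complex_of_real r"
  have ms: "m \<in> sphere x r" using r by (simp add: m_def dist_norm)
  then obtain c \<epsilon> where ce: "\<epsilon>>0" "m \<in> sphere c 1" "ball m \<epsilon> \<inter> ball c 1 \<subseteq> inside(path_image g)"
    using bcc sph by blast
  obtain y where y: "dist c y < 1" "dist m y < \<epsilon>" "r < dist x y"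
    using disk_escape[of c m x r \<epsilon>] ce ms r r1 by auto
  have "y \<in> inside (path_image g)" using ce(3) y by (auto simp: dist_commute)
  then show False using Isub y by auto
next
  case False
  then obtain z where z: "z \<in> path_image g" "z \<notin> cball x r" by blast
  define d where "d = dist x z - r"
  have d0: "d > 0" using z by (simp add: d_def)
  obtain s0 where s0: "s0 \<in> {0..1}" "g s0 = z" using z by (auto simp: path_image_def)
  define h where "h = shiftpath s0 g"
  have sph0: "simple_path h" using simple_path_shiftpath[OF sp cl] s0 by (simp add: h_def)
  have h0: "h 0 = z" using pathstart_shiftpath[of s0 g] s0 by (simp add: h_def pathstart_def)
  have h1: "h 1 = z" using pathfinish_shiftpath[of s0 g] s0 cl by (simp add: h_def pathfinish_def)
  have imh: "path_image h = path_image g" using path_image_shiftpath[OF s0(1) cl] by (simp add: h_def)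
  have ch: "continuous_on {0..1} h" using simple_path_imp_path[OF sph0] by (simp add: path_def)
  have "uniformly_continuous_on {0..1} h" using compact_uniformly_continuous[OF ch] by simp
  then obtain \<tau> where tau: "\<tau> > 0" "\<And>u v. u \<in> {0..1} \<Longrightarrow> v \<in> {0..1} \<Longrightarrow> dist v u < \<tau> \<Longrightarrow> dist (h v) (h u) < d"
    unfolding uniformly_continuous_on_def using d0 by metis
  define \<tau>' where "\<tau>' = min (\<tau>/2) (1/4)"
  have t': "0 < \<tau>'" "\<tau>' \<le> 1/4" "\<tau>' < \<tau>" using tau by (auto simp: \<tau>'_def)
  define A where "A = subpath \<tau>' (1-\<tau>') h"
  have arcA: "arc A" unfolding A_def
    using t' by (intro arc_simple_path_subpath_interior[OF sph0]) auto
  have imA: "path_image A = h ` {\<tau>'..1-\<tau>'}" using t' by (simp add: A_def path_image_subpath)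
  have "{\<tau>'..1-\<tau>'} \<subseteq> {0..1}" using t' by auto
  then have AG: "path_image A \<subseteq> path_image g" using imA imh unfolding path_image_def by (metis image_mono)
  have sA: "sphere x r \<subseteq> path_image A"
  proof
    fix w assume w: "w \<in> sphere x r"
    then have "w \<in> h ` {0..1}" using sph imh by (auto simp: path_image_def)
    then obtain v where v: "v \<in> {0..1}" "h v = w" by auto
    have far: False if "dist w z < d"
    proof -
      have "dist x z \<le> dist x w + dist w z" by (rule dist_triangle)
      then show False using that w by (simp add: d_def)
    qed
    have "v \<ge> \<tau>'"
    proof (rule ccontr)
      assume "\<not> \<tau>' \<le> v"
      then have "dist (h v) (h 0) < d" using tau(2)[of 0 v] v t' by (auto simp: dist_real_def)
      then show False using far v h0 by simp
    qed
    moreover have "v \<le> 1 - \<tau>'"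
    proof (rule ccontr)
      assume "\<not> v \<le> 1 - \<tau>'"
      then have "dist (h v) (h 1) < d" using tau(2)[of 1 v] v t' by (auto simp: dist_real_def)
      then show False using far v h1 by simp
    qed
    ultimately show "w \<in> path_image A" using imA v by auto
  qed
  have conn: "connected (- path_image A)" using connected_arc_complement[OF arcA] by simp
  have xI: "x \<in> inside (path_image g)" using bin r by auto
  then have xA: "x \<notin> path_image A" using AG inside_no_overlap by blast
  have "bounded (path_image A \<union> cball x r)"
    using bounded_arc_image[OF arcA] by simp
  then obtain y where y: "y \<notin> path_image A \<union> cball x r"
    using not_bounded_UNIV by (metis UNIV_I bounded_subset subsetI)
  have "ball x r \<inter> - path_image A = {} \<or> (- cball x r) \<inter> - path_image A = {}"
    apply (rule connectedD[OF conn])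
    using sA by auto
  moreover have "x \<in> ball x r \<inter> - path_image A" using xA r by auto
  moreover have "y \<in> (- cball x r) \<inter> - path_image A" using y by auto
  ultimately show False by blast
qed



lemma local_far:
  fixes g \<alpha> :: "real \<Rightarrow> complex"
  assumes sp: "simple_path g" and cl: "pathfinish g = pathstart g"
    and bcc: "\<forall>m\<in>path_image g. \<exists>c \<epsilon>. \<epsilon>>0 \<and> m \<in> sphere c 1 \<and> ball m \<epsilon> \<inter> ball c 1 \<subseteq> inside(path_image g)"
    and r: "0 < r" and bin: "ball x r \<subseteq> inside(path_image g)"
    and st: "0 \<le> s" "s < t" "t \<le> 1"
    and arc: "arc \<alpha>" and as: "pathstart \<alpha> = g s" and af: "pathfinish \<alpha> = g t"
    and asph: "path_image \<alpha> \<subseteq> sphere x r"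
    and aG: "path_image \<alpha> \<inter> path_image g = {g s, g t}"
  shows "(\<exists>y\<in>g ` {s..t}. 1 \<le> dist x y) \<and> (\<exists>y\<in>g ` ({t..1} \<union> {0..s}). 1 \<le> dist x y)"
proof -
  define p where "p = g s"
  define q where "q = g t"
  have pq: "p \<noteq> q" using arc_distinct_ends[OF arc] as af by (simp add: p_def q_def)
  have g01: "g 1 = g 0" using cl by (simp add: pathfinish_def pathstart_def)
  define h where "h = shiftpath s g"
  define u where "u = t - s"
  have s01: "s \<in> {0..1}" using st by auto
  have sph: "simple_path h" using simple_path_shiftpath[OF sp cl] st by (simp add: h_def)
  have imh: "path_image h = path_image g" using path_image_shiftpath[OF s01 cl] by (simp add: h_def)
  have hv: "\<And>v. 0 \<le> v \<Longrightarrow> s + v \<le> 1 \<Longrightarrow> h v = g (s + v)" by (simp add: h_def shiftpath_def)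
  have hv2: "\<And>v. 1 < s + v \<Longrightarrow> h v = g (s + v - 1)" by (simp add: h_def shiftpath_def)
  have h1: "h 1 = p"
  proof (cases "s = 0")
    case True then show ?thesis using g01 by (simp add: h_def shiftpath_def p_def)
  next
    case False then show ?thesis using st by (simp add: h_def shiftpath_def p_def)
  qed
  have h0: "h 0 = p" using hv[of 0] st by (simp add: p_def)
  have u0: "0 < u" using st by (simp add: u_def)
  have u1: "u < 1"
  proof (rule ccontr)
    assume "\<not> u < 1"
    then have "s = 0" "t = 1" using st by (auto simp: u_def)
    then show False using pq g01 by (simp add: p_def q_def)
  qed
  have hu: "h u = q" using hv[of u] st by (simp add: u_def q_def)
  have lf: "\<And>a b. a \<in> {0..1} \<Longrightarrow> b \<in> {0..1} \<Longrightarrow> h a = h b \<Longrightarrow> a = b \<or> a = 0 \<and> b = 1 \<or> a = 1 \<and> b = 0"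
    using sph by (auto simp: simple_path_def loop_free_def)
  define c1 where "c1 = subpath 0 u h"
  define c2 where "c2 = subpath 1 u h"
  have sc1: "simple_path c1" unfolding c1_def using u0 u1 by (intro simple_path_subpath[OF sph]) auto
  have sc2: "simple_path c2" unfolding c2_def using u0 u1 by (intro simple_path_subpath[OF sph]) auto
  have c1s: "pathstart c1 = p" "pathfinish c1 = q" using h0 hu by (auto simp: c1_def)
  have c2s: "pathstart c2 = p" "pathfinish c2 = q" using h1 hu by (auto simp: c2_def)
  have im1: "path_image c1 = h ` {0..u}" using u0 by (simp add: c1_def path_image_subpath)
  have im2: "path_image c2 = h ` {u..1}" using u1 by (simp add: c2_def path_image_subpath)
  have un: "path_image c1 \<union> path_image c2 = path_image g"
  proof -
    have "{0..u} \<union> {u..1} = {0..1::real}" using u0 u1 by auto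
    then have "h ` {0..u} \<union> h ` {u..1} = h ` {0..1}" by (metis image_Un)
    then show ?thesis using im1 im2 imh by (simp add: path_image_def)
  qed
  have pq1: "p \<in> path_image c1" "q \<in> path_image c1" using c1s by (auto simp flip: c1s)
  have pq2: "p \<in> path_image c2" "q \<in> path_image c2" using c2s by (auto simp flip: c2s)
  have i12: "path_image c1 \<inter> path_image c2 = {p,q}"
  proof
    show "path_image c1 \<inter> path_image c2 \<subseteq> {p,q}"
    proof
      fix z assume "z \<in> path_image c1 \<inter> path_image c2"
      then obtain a b where ab: "a \<in> {0..u}" "b \<in> {u..1}" "z = h a" "h a = h b" using im1 im2 by auto
      then have "a = b \<or> a = 0 \<and> b = 1 \<or> a = 1 \<and> b = 0" using lf[of a b] u0 u1 by auto
      then show "z \<in> {p,q}" using ab h0 hu u1 by auto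
    qed
    show "{p,q} \<subseteq> path_image c1 \<inter> path_image c2" using pq1 pq2 by auto
  qed
  have aG': "path_image \<alpha> \<inter> path_image g = {p,q}" using aG by (simp add: p_def q_def)
  have i1a: "path_image c1 \<inter> path_image \<alpha> = {p,q}" using aG' un pq1 by blast
  have i2a: "path_image c2 \<inter> path_image \<alpha> = {p,q}" using aG' un pq2 by blast
  have clG: "closed (path_image g)" by (simp add: closed_path_image simple_path_imp_path sp)
  have ain: "path_image \<alpha> - {p,q} \<subseteq> inside(path_image g)"
  proof
    fix v assume v: "v \<in> path_image \<alpha> - {p,q}"
    then have vs: "v \<in> cball x r" using asph by auto
    have vG: "v \<notin> path_image g" using v aG' by blast
    have "cball x r = closure (ball x r)" using r by simp
    also have "\<dots> \<subseteq> closure (inside (path_image g))" using bin by (rule closure_mono)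
    finally have "v \<in> closure (inside (path_image g))" using vs by blast
    moreover have "v \<notin> frontier (inside (path_image g))" using frontier_inside_subset[OF clG] vG by blast
    ultimately show "v \<in> inside (path_image g)"
      by (simp add: frontier_def interior_open open_inside clG)
  qed
  have sa: "simple_path \<alpha>" using arc by (simp add: arc_imp_simple_path)
  have asp: "pathstart \<alpha> = p" "pathfinish \<alpha> = q" using as af by (auto simp: p_def q_def)
  have bcc1: "\<forall>m \<in> path_image c1. \<exists>c \<epsilon>. \<epsilon> > 0 \<and> m \<in> sphere c 1 \<and>
               ball m \<epsilon> \<inter> ball c 1 \<subseteq> inside(path_image c1 \<union> path_image c2)"
  proof
    fix m assume "m \<in> path_image c1"
    then have "m \<in> path_image g" using un by blast
    then show "\<exists>c \<epsilon>. \<epsilon> > 0 \<and> m \<in> sphere c 1 \<and>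
               ball m \<epsilon> \<inter> ball c 1 \<subseteq> inside(path_image c1 \<union> path_image c2)"
      using bcc un by simp
  qed
  have bcc2: "\<forall>m \<in> path_image c2. \<exists>c \<epsilon>. \<epsilon> > 0 \<and> m \<in> sphere c 1 \<and>
               ball m \<epsilon> \<inter> ball c 1 \<subseteq> inside(path_image c2 \<union> path_image c1)"
  proof
    fix m assume "m \<in> path_image c2"
    then have "m \<in> path_image g" using un by blast
    moreover have "path_image c2 \<union> path_image c1 = path_image g" using un by (simp add: Un_commute)
    ultimately show "\<exists>c \<epsilon>. \<epsilon> > 0 \<and> m \<in> sphere c 1 \<and>
               ball m \<epsilon> \<inter> ball c 1 \<subseteq> inside(path_image c2 \<union> path_image c1)"
      using bcc by simp
  qed
  have ain1: "path_image \<alpha> - {p,q} \<subseteq> inside(path_image c1 \<union> path_image c2)" using ain un by simp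
  have bin1: "ball x r \<subseteq> inside(path_image c1 \<union> path_image c2)" using bin un by simp
  have un2: "path_image c2 \<union> path_image c1 = path_image g" using un by (simp add: Un_commute)
  have ain2: "path_image \<alpha> - {p,q} \<subseteq> inside(path_image c2 \<union> path_image c1)" using ain un2 by simp
  have bin2: "ball x r \<subseteq> inside(path_image c2 \<union> path_image c1)" using bin un2 by simp
  have i21: "path_image c2 \<inter> path_image c1 = {p,q}" using i12 by blast
  obtain y1 where y1: "y1 \<in> path_image c1" "1 \<le> dist x y1"
    using pocket[OF sc1 c1s sc2 c2s sa asp pq i12 i1a i2a asph ain1 bin1 r bcc1] by blast
  obtain y2 where y2: "y2 \<in> path_image c2" "1 \<le> dist x y2"
    using pocket[OF sc2 c2s sc1 c1s sa asp pq i21 i2a i1a asph ain2 bin2 r bcc2] by blast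
  have S1: "h ` {0..u} \<subseteq> g ` {s..t}"
  proof
    fix z assume "z \<in> h ` {0..u}"
    then obtain v where v: "v \<in> {0..u}" "z = h v" by auto
    then have "z = g (s + v)" using hv[of v] st by (auto simp: u_def)
    moreover have "s + v \<in> {s..t}" using v by (auto simp: u_def)
    ultimately show "z \<in> g ` {s..t}" by blast
  qed
  have S2: "h ` {u..1} \<subseteq> g ` ({t..1} \<union> {0..s})"
  proof
    fix z assume "z \<in> h ` {u..1}"
    then obtain v where v: "v \<in> {u..1}" "z = h v" by auto
    show "z \<in> g ` ({t..1} \<union> {0..s})"
    proof (cases "s + v \<le> 1")
      case True
      have "0 \<le> v" using v u0 by simp
      then have "z = g (s + v)" using hv[of v] v(2) True by simp
      moreover have "s + v \<in> {t..1}" using v True by (auto simp: u_def)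
      ultimately show ?thesis by blast
    next
      case False
      then have "z = g (s + v - 1)" using hv2[of v] v(2) by simp
      moreover have "s + v - 1 \<in> {0..s}" using v False by auto
      ultimately show ?thesis by blast
    qed
  qed
  have "y1 \<in> h ` {0..u}" using y1(1) by (simp add: im1)
  then have "y1 \<in> g ` {s..t}" by (rule subsetD[OF S1])
  moreover have "y2 \<in> h ` {u..1}" using y2(1) by (simp add: im2)
  then have "y2 \<in> g ` ({t..1} \<union> {0..s})" by (rule subsetD[OF S2])
  ultimately show ?thesis using y1(2) y2(2) by blast
qed


theorem lemma5:
  fixes g :: "real \<Rightarrow> complex"
  assumes "jordan_curve g" and "bounded_convex_curvature g"
  shows "\<exists>\<eta>>0. \<forall>x r. r > 0 \<longrightarrow> ball x r \<subseteq> Int_curve g \<longrightarrow>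
           (\<exists>p q. p \<noteq> q \<and> p \<in> frontier (ball x r) \<inter> path_image g
                        \<and> q \<in> frontier (ball x r) \<inter> path_image g) \<longrightarrow> r \<ge> \<eta>"
proof -
  have sp: "simple_path g" and cl: "pathfinish g = pathstart g" using assms(1) by (auto simp: jordan_curve_def)
  have bcc: "\<forall>m\<in>path_image g. \<exists>c \<epsilon>. \<epsilon>>0 \<and> m \<in> sphere c 1 \<and> ball m \<epsilon> \<inter> ball c 1 \<subseteq> inside(path_image g)"
    using assms(2) by (auto simp: bounded_convex_curvature_def Int_curve_def)
  have clG: "closed (path_image g)" by (simp add: closed_path_image simple_path_imp_path sp)
  obtain \<eta>0 where e0: "\<eta>0 > 0" and T: "\<And>s t. 0 \<le> s \<Longrightarrow> s \<le> t \<Longrightarrow> t \<le> 1 \<Longrightarrow> dist (g s) (g t) < \<eta>0 \<Longrightarrow>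
           (\<forall>v\<in>{s..t}. dist (g v) (g s) < 1/2) \<or> (\<forall>v\<in>{t..1} \<union> {0..s}. dist (g v) (g s) < 1/2)"
    using unif_arc_small[OF sp cl, of "1/2"] by auto
  define \<eta> where "\<eta> = min (1/2) (\<eta>0/2)"
  have eta0: "\<eta> > 0" using e0 by (simp add: \<eta>_def)
  show ?thesis
  proof (intro exI[of _ \<eta>] conjI eta0 allI impI)
    fix x :: complex and r :: real
    assume r: "r > 0" and bin0: "ball x r \<subseteq> Int_curve g"
      and ex: "\<exists>p q. p \<noteq> q \<and> p \<in> frontier (ball x r) \<inter> path_image g \<and> q \<in> frontier (ball x r) \<inter> path_image g"
    have bin: "ball x r \<subseteq> inside (path_image g)" using bin0 by (simp add: Int_curve_def)
    obtain p q where pq: "p \<noteq> q" "p \<in> sphere x r" "p \<in> path_image g" "q \<in> sphere x r" "q \<in> path_image g"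
      using ex r by (auto simp: frontier_ball)
    show "\<eta> \<le> r"
    proof (rule ccontr)
      assume "\<not> \<eta> \<le> r"
      then have rh: "r < 1/2" "2 * r < \<eta>0" by (auto simp: \<eta>_def)
      have "\<not> sphere x r \<subseteq> path_image g"
        using sphere_not_in_curve[OF sp cl r _ _ bin bcc] rh by auto
      then obtain w0 where w0: "w0 \<in> sphere x r" "w0 \<notin> path_image g" by blast
      obtain \<alpha> where \<alpha>: "arc \<alpha>" "pathstart \<alpha> \<in> path_image g" "pathfinish \<alpha> \<in> path_image g"
          "path_image \<alpha> \<subseteq> sphere x r" "path_image \<alpha> \<inter> path_image g = {pathstart \<alpha>, pathfinish \<alpha>}"
        using circle_gap_arc[OF clG r pq(2,3) pq(4,5) pq(1) w0] by blast
      have fin: False if st: "0 \<le> s" "s < t" "t \<le> 1" and b: "arc \<beta>" "pathstart \<beta> = g s" "pathfinish \<beta> = g t"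
         "path_image \<beta> \<subseteq> sphere x r" "path_image \<beta> \<inter> path_image g = {g s, g t}" for s t \<beta>
      proof -
        obtain y1 y2 where y1: "y1 \<in> g ` {s..t}" "1 \<le> dist x y1"
            and y2: "y2 \<in> g ` ({t..1} \<union> {0..s})" "1 \<le> dist x y2"
          using local_far[OF sp cl bcc r bin st b] by blast
        have gs: "g s \<in> sphere x r" using b(2,4) pathstart_in_path_image[of \<beta>] by auto
        have gt: "g t \<in> sphere x r" using b(3,4) pathfinish_in_path_image[of \<beta>] by auto
        have "dist (g s) (g t) \<le> dist (g s) x + dist x (g t)" by (rule dist_triangle)
        also have "\<dots> = 2 * r" using gs gt by (simp add: dist_commute)
        finally have "dist (g s) (g t) < \<eta>0" using rh by linarith
        then have alt: "(\<forall>v\<in>{s..t}. dist (g v) (g s) < 1/2) \<or> (\<forall>v\<in>{t..1} \<union> {0..s}. dist (g v) (g s) < 1/2)"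
          using T[of s t] st by simp
        have near: False if "dist y (g s) < 1/2" "1 \<le> dist x y" for y
        proof -
          have "dist x y \<le> dist x (g s) + dist (g s) y" by (rule dist_triangle)
          then show False using that gs rh by (simp add: dist_commute)
        qed
        show False
        proof (cases "\<forall>v\<in>{s..t}. dist (g v) (g s) < 1/2")
          case True
          then show False using y1 near by blast
        next
          case False
          then have "\<forall>v\<in>{t..1} \<union> {0..s}. dist (g v) (g s) < 1/2" using alt by blast
          then show False using y2 near by blast
        qed
      qed
      obtain s where s: "s \<in> {0..1}" "g s = pathstart \<alpha>" using \<alpha>(2) by (auto simp: path_image_def)
      obtain t where t: "t \<in> {0..1}" "g t = pathfinish \<alpha>" using \<alpha>(3) by (auto simp: path_image_def)
      have "s \<noteq> t" using s t arc_distinct_ends[OF \<alpha>(1)] by auto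
      then show False
      proof (cases "s < t")
        case True
        then show False using fin[of s t \<alpha>] s t \<alpha> by auto
      next
        case False
        then have ts: "t < s" using \<open>s \<noteq> t\<close> by simp
        show False
          using fin[of t s "reversepath \<alpha>"] s t \<alpha> ts
          by (auto simp: arc_reversepath path_image_reversepath insert_commute)
      qed
    qed
  qed
qed

end
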